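(* Let $\mathcal M$ be a matroid on a finite ground set $V$ with $|V|=n$ and $\zeta(\mathcal M)=\zeta$, and let $g$ be a positive integer with $g\le\frac{n}{\zeta}$. Then $\zeta(\mathcal M^g)=\frac{n}{g}$, where $\mathcal M^g=\{A\in\mathcal M: |A|\le g\}$.
   Context: A simplicial complex $\mathcal C$ on ground set $V(\mathcal C)$ is a family of subsets closed under taking subsets. A matroid is a complex in which, for every subset $W$ of the ground set, all maximal members contained in $W$ have the same size. For a complex $\mathcal C$, $\mathrm{rank}(\mathcal C)$ is the maximal size of a member, $\mathcal C[S]$ is the set of members of $\mathcal C$ contained in $S$, and $\zeta(\mathcal C)=\max_{S\subseteq V(\mathcal C)}\frac{|S|}{\mathrm{rank}(\mathcal C[S])}$ (over nonempty $S$). The complex $\mathcal M^g$ is regarded as a complex on the same ground set $V$. *)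

theory Defs
  imports Complex_Main "HOL-Library.Extended_Real"
begin

definition simplicial_complex :: "'a set \<Rightarrow> 'a set set \<Rightarrow> bool" where
  "simplicial_complex V C \<longleftrightarrow> C \<noteq> {} \<and> (\<forall>A\<in>C. A \<subseteq> V) \<and> (\<forall>A\<in>C. \<forall>B. B \<subseteq> A \<longrightarrow> B \<in> C)"

definition maximal_in :: "'a set set \<Rightarrow> 'a set \<Rightarrow> 'a set \<Rightarrow> bool" where
  "maximal_in C W A \<longleftrightarrow> A \<in> C \<and> A \<subseteq> W \<and> (\<forall>B\<in>C. A \<subseteq> B \<and> B \<subseteq> W \<longrightarrow> B = A)"

definition matroid :: "'a set \<Rightarrow> 'a set set \<Rightarrow> bool" where
  "matroid V C \<longleftrightarrow> simplicial_complex V C \<and>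
     (\<forall>W. W \<subseteq> V \<longrightarrow> (\<forall>A B. maximal_in C W A \<and> maximal_in C W B \<longrightarrow> card A = card B))"

definition restr :: "'a set set \<Rightarrow> 'a set \<Rightarrow> 'a set set" where
  "restr C S = {A \<in> C. A \<subseteq> S}"

definition cx_rank :: "'a set set \<Rightarrow> nat" where
  "cx_rank C = Max (card ` C)"

text \<open>zeta, valued in extended reals: |S| / 0 = \<infinity> for nonempty S.\<close>
definition zeta :: "'a set \<Rightarrow> 'a set set \<Rightarrow> ereal" where
  "zeta V C = (SUP S \<in> {S. S \<subseteq> V \<and> S \<noteq> {}}. ereal (real (card S)) / ereal (real (cx_rank (restr C S))))"

definition trunc :: "'a set set \<Rightarrow> nat \<Rightarrow> 'a set set" where
  "trunc C g = {A \<in> C. card A \<le> g}"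


end

theory Submission
  imports Defs
begin

lemma rank_trunc:
  assumes fin: "finite V" and sc: "simplicial_complex V M" and S: "S \<subseteq> V"
  shows "cx_rank (restr (trunc M g) S) = min (cx_rank (restr M S)) g"
proof -
  have emp: "{} \<in> M" using sc unfolding simplicial_complex_def by blast
  have finR: "finite (restr M S)"
    by (rule finite_subset[of _ "Pow V"]) (use sc fin in \<open>auto simp: restr_def simplicial_complex_def\<close>)
  have neR: "restr M S \<noteq> {}" using emp by (auto simp: restr_def)
  define m where "m = Max (card ` restr M S)"
  have mi: "m \<in> card ` restr M S" unfolding m_def
    by (rule Max_in[OF finite_imageI[OF finR]]) (use neR in simp)
  then obtain A where A1: "A \<in> restr M S" and A2: "m = card A" by (rule imageE)
  note A = A1 A2[symmetric]
  have AS: "A \<subseteq> S" using A(1) by (simp add: restr_def)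
  have Af: "finite A" using finite_subset[OF AS finite_subset[OF S fin]] .
  obtain B where B: "B \<subseteq> A" "card B = min m g"
    using obtain_subset_with_card_n[of "min m g" A] A(2) by auto
  have BM: "B \<in> restr (trunc M g) S"
    using A(1) B sc unfolding restr_def trunc_def simplicial_complex_def by auto
  have finT: "finite (restr (trunc M g) S)"
    by (rule finite_subset[OF _ finR]) (auto simp: restr_def trunc_def)
  have le: "\<forall>y\<in>card ` restr (trunc M g) S. y \<le> min m g"
  proof
    fix y assume "y \<in> card ` restr (trunc M g) S"
    then obtain C where C: "C \<in> restr (trunc M g) S" "y = card C" by auto
    have "C \<in> restr M S" using C(1) by (auto simp: restr_def trunc_def)
    hence "card C \<le> m" unfolding m_def using finR by auto
    moreover have "card C \<le> g" using C(1) by (auto simp: restr_def trunc_def)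
    ultimately show "y \<le> min m g" using C(2) by simp
  qed
  have "Max (card ` restr (trunc M g) S) = min m g"
  proof (rule Max_eqI)
    show "finite (card ` restr (trunc M g) S)" using finT by simp
    show "\<And>y. y \<in> card ` restr (trunc M g) S \<Longrightarrow> y \<le> min m g" using le by blast
    show "min m g \<in> card ` restr (trunc M g) S" using BM B(2) by (metis image_eqI)
  qed
  thus ?thesis unfolding cx_rank_def m_def by simp
qed

theorem lemma4p1:
  fixes V :: "'a set" and M :: "'a set set" and g :: nat
  assumes "finite V"
    and "matroid V M"
    and "0 < g"
    and "ereal (real g) \<le> ereal (real (card V)) / zeta V M"
  shows "zeta V (trunc M g) = ereal (real (card V) / real g)"
proof -
  have sc: "simplicial_complex V M" using assms(2) by (simp add: matroid_def)
  define r where "r S = cx_rank (restr M S)" for S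
  define n where "n = card V"
  have zinf: "zeta V M \<noteq> \<infinity>"
  proof
    assume "zeta V M = \<infinity>"
    hence "ereal (real (card V)) / zeta V M = 0" by simp
    thus False using assms(3,4) by simp
  qed
  have term_le: "ereal (real (card S)) / ereal (real (r S)) \<le> zeta V M"
    if "S \<subseteq> V" "S \<noteq> {}" for S
    unfolding zeta_def r_def by (rule SUP_upper) (use that in auto)
  have rpos: "r S > 0" if S: "S \<subseteq> V" "S \<noteq> {}" for S
  proof (rule ccontr)
    assume "\<not> r S > 0"
    hence "r S = 0" by simp
    moreover have "card S > 0" using S finite_subset[OF S(1) assms(1)] by (simp add: card_gt_0_iff)
    ultimately have "ereal (real (card S)) / ereal (real (r S)) = \<infinity>"
      by (simp add: divide_ereal_def)
    thus False using term_le[OF S] zinf by simp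
  qed
  have Vne: "V \<noteq> {}"
  proof
    assume "V = {}"
    hence "zeta V M = bot" unfolding zeta_def by simp
    hence "zeta V M = -\<infinity>" by (simp only: bot_ereal_def)
    hence "ereal (real (card V)) / zeta V M = 0" by (simp add: divide_ereal_def)
    thus False using assms(3,4) by simp
  qed
  have tle: "ereal (real (card S) / real (r S)) \<le> zeta V M"
    if "S \<subseteq> V" "S \<noteq> {}" for S
    using term_le[OF that] rpos[OF that] by simp
  have lb: "ereal (real (card V) / real (r V)) \<le> zeta V M" by (rule tle[OF order.refl Vne])
  have zm: "zeta V M \<noteq> -\<infinity>"
  proof
    assume "zeta V M = -\<infinity>"
    thus False using lb by simp
  qed
  obtain z where z: "zeta V M = ereal z"
    using zinf zm by (cases "zeta V M") auto
  have npos: "n > 0" using Vne assms(1) unfolding n_def by (simp add: card_gt_0_iff)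
  have zpos: "z > 0"
  proof -
    have "real n / real (r V) > 0" using npos rpos[OF order.refl Vne] by simp
    moreover have "real n / real (r V) \<le> z" using tle[OF order.refl Vne] z n_def by simp
    ultimately show ?thesis by linarith
  qed
  have gz: "real g \<le> real n / z"
    using assms(4) z zpos n_def by simp
  have gz2: "real g * z \<le> real n" using gz zpos by (simp add: field_simps)
  have Sb: "real (card S) / real (r S) \<le> real n / real g"
    if "S \<subseteq> V" "S \<noteq> {}" for S
  proof -
    have a: "real (card S) / real (r S) \<le> z" using tle[OF that] z by simp
    have rp: "real (r S) > 0" using rpos[OF that] by simp
    have "real g * (real (card S) / real (r S)) \<le> real g * z"
      using mult_left_mono[OF a, of "real g"] by simp
    also have "\<dots> \<le> real n" by (rule gz2)
    finally show ?thesis using assms(3) by (simp add: field_simps)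
  qed
  have gr: "g \<le> r V"
  proof -
    have "real n / real (r V) \<le> z" using tle[OF order.refl Vne] z n_def by simp
    hence "real g * (real n / real (r V)) \<le> real n"
      using gz2 assms(3) by (meson dual_order.trans mult_left_mono of_nat_0_le_iff)
    hence "real g \<le> real (r V)" using npos rpos[OF order.refl Vne]
      by (simp add: field_simps)
    thus ?thesis by simp
  qed
  have rk: "cx_rank (restr (trunc M g) S) = min (r S) g" if "S \<subseteq> V" for S
    using rank_trunc[OF assms(1) sc that] r_def by simp
  show ?thesis unfolding zeta_def
  proof (rule antisym)
    show "(SUP S\<in>{S. S \<subseteq> V \<and> S \<noteq> {}}. ereal (real (card S)) / ereal (real (cx_rank (restr (trunc M g) S))))
      \<le> ereal (real (card V) / real g)"
    proof (rule SUP_least)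
      fix S assume "S \<in> {S. S \<subseteq> V \<and> S \<noteq> {}}"
      hence S: "S \<subseteq> V" "S \<noteq> {}" by auto
      have cS: "card S \<le> n" using S assms(1) n_def card_mono by blast
      show "ereal (real (card S)) / ereal (real (cx_rank (restr (trunc M g) S))) \<le> ereal (real (card V) / real g)"
      proof (cases "r S \<le> g")
        case True
        then show ?thesis using rk[OF S(1)] Sb[OF S] rpos[OF S] n_def by simp
      next
        case False
        hence "real (card S) / real g \<le> real n / real g" using cS
          by (simp add: divide_right_mono)
        then show ?thesis using rk[OF S(1)] False assms(3) n_def by simp
      qed
    qed
    show "ereal (real (card V) / real g) \<le> (SUP S\<in>{S. S \<subseteq> V \<and> S \<noteq> {}}. ereal (real (card S)) / ereal (real (cx_rank (restr (trunc M g) S))))"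
    proof -
      have "ereal (real (card V)) / ereal (real (cx_rank (restr (trunc M g) V))) = ereal (real (card V) / real g)"
        using rk[OF order.refl] gr assms(3) by simp
      moreover have "ereal (real (card V)) / ereal (real (cx_rank (restr (trunc M g) V))) \<le> (SUP S\<in>{S. S \<subseteq> V \<and> S \<noteq> {}}. ereal (real (card S)) / ereal (real (cx_rank (restr (trunc M g) S))))"
        by (rule SUP_upper) (use Vne in auto)
      ultimately show ?thesis by simp
    qed
  qed
qed

end
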